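(* Let $d\ge1$, $0<c\le\infty$, $X=(0,c)$, $X_{\mathrm{SYM}}=(-c,0)\cup(0,c)$, $\mathbb{X}=(X_{\mathrm{SYM}})^d$. For $i=1,\dots,d$ let $w_i\in C^2(X)$ be strictly positive, $p_i\in C^2(X)$ real-valued and nonvanishing, $q_i\in C^1(X)$ real-valued, $a_i\ge0$ constants, $\mu_i(dx)=w_i(x)dx$ on $X$, $\delta_i=p_i\frac{d}{dx}+q_i$, $\delta_i^*=-p_i\frac{d}{dx}+q_i-p_i\frac{w_i'}{w_i}-p_i'$, $L_i=a_i+\delta_i^*\delta_i$. Assume for each $i$ there is an orthonormal basis $\{\varphi^{(i)}_k:k\in\mathbb{N}\}$ of $L^2(X,\mu_i)$ with $\varphi^{(i)}_k\in C^\infty(X)$, $L_i\varphi^{(i)}_k=\lambda^{(i)}_k\varphi^{(i)}_k$, $\lambda^{(i)}_0<\lambda^{(i)}_1<\dots\to\infty$, $\delta_i\varphi^{(i)}_k\in L^2(X,\mu_i)$ and $\langle\delta_i\varphi^{(i)}_k,\delta_i\varphi^{(i)}_m\rangle_{\mu_i}=\langle\delta_i^*\delta_i\varphi^{(i)}_k,\varphi^{(i)}_m\rangle_{\mu_i}$ for all $k,m$; assume moreover $a_i=\lambda^{(i)}_0$ for every $i$. Extend $w_i,p_i,\varphi^{(i)}_k$ evenly and $q_i$ oddly to $X_{\mathrm{SYM}}$, define $\Phi^{(i)}_n=\frac1{\sqrt2}\varphi^{(i)}_{n/2}$ for even $n$, $\Phi^{(i)}_n=-\frac1{\sqrt2}(\lambda^{(i)}_{(n+1)/2}-a_i)^{-1/2}\delta_i\varphi^{(i)}_{(n+1)/2}$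 for odd $n$, $\Phi_n=\Phi^{(1)}_{n_1}\otimes\cdots\otimes\Phi^{(d)}_{n_d}$ for $n\in\mathbb{N}^d$, with the convention $\Phi_n\equiv0$ if $n\in\mathbb{Z}^d\setminus\mathbb{N}^d$, and $\langle n\rangle_j=\lfloor\frac{n_j+1}2\rfloor$. Let $$D_jf(x)=p_j(x_j)\partial_{x_j}f(x)+q_j(x_j)\tfrac{f(x)+f(\sigma_jx)}{2}+\Big[p_j(x_j)\tfrac{w_j'(x_j)}{w_j(x_j)}+p_j'(x_j)-q_j(x_j)\Big]\tfrac{f(x)-f(\sigma_jx)}{2}$$ ($\sigma_j$ the reflection changing the sign of the $j$th coordinate). Then for $j=1,\dots,d$, $N\ge1$ and $n\in\mathbb{N}^d$, $$D_j^N\Phi_n=\begin{cases}(-1)^{N/2}\big(\lambda^{(j)}_{\langle n\rangle_j}-a_j\big)^{N/2}\Phi_n,& N\text{ even},\\ (-1)^{n_j+1+(N-1)/2}\big(\lambda^{(j)}_{\langle n\rangle_j}-a_j\big)^{N/2}\Phi_{n-(-1)^{n_j}e_j},& N\text{ odd},\end{cases}$$ where $e_j$ is the $j$th coordinate vector.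
   Context: $\mathbb{N}=\{0,1,2,\dots\}$; $\lfloor\cdot\rfloor$ is the floor function. *)

theory Defs
  imports "HOL-Analysis.Analysis"
begin

definition Xset :: "ereal \<Rightarrow> real set" where
  "Xset c = {x. 0 < x \<and> ereal x < c}"

definition Xsym :: "ereal \<Rightarrow> real set" where
  "Xsym c = {x. x \<noteq> 0 \<and> ereal \<bar>x\<bar> < c}"

definition Ck_on :: "nat \<Rightarrow> real set \<Rightarrow> (real \<Rightarrow> real) \<Rightarrow> bool" where
  "Ck_on k S f \<longleftrightarrow>
     (\<forall>m<k. \<forall>x\<in>S. ((deriv ^^ m) f) field_differentiable (at x)) \<and>
     continuous_on S ((deriv ^^ k) f)"

definition smooth_on :: "real set \<Rightarrow> (real \<Rightarrow> real) \<Rightarrow> bool" where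
  "smooth_on S f \<longleftrightarrow> (\<forall>k. Ck_on k S f)"

text \<open>delta = p d/dx + q and its formal adjoint w.r.t. w(x)dx.\<close>
definition delta :: "(real \<Rightarrow> real) \<Rightarrow> (real \<Rightarrow> real) \<Rightarrow> (real \<Rightarrow> real) \<Rightarrow> real \<Rightarrow> real" where
  "delta p q f = (\<lambda>x. p x * deriv f x + q x * f x)"

definition delta_star ::
  "(real \<Rightarrow> real) \<Rightarrow> (real \<Rightarrow> real) \<Rightarrow> (real \<Rightarrow> real) \<Rightarrow> (real \<Rightarrow> real) \<Rightarrow> real \<Rightarrow> real" where
  "delta_star w p q g = (\<lambda>x. - p x * deriv g x + q x * g x
        - p x * (deriv w x / w x) * g x - deriv p x * g x)"

definition Lop :: "real \<Rightarrow> (real \<Rightarrow> real) \<Rightarrow> (real \<Rightarrow> real) \<Rightarrow> (real \<Rightarrow> real)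
     \<Rightarrow> (real \<Rightarrow> real) \<Rightarrow> real \<Rightarrow> real" where
  "Lop a w p q f = (\<lambda>x. a * f x + delta_star w p q (delta p q f) x)"

definition meas :: "ereal \<Rightarrow> (real \<Rightarrow> real) \<Rightarrow> real measure" where
  "meas c w = density lborel (\<lambda>x. ennreal (indicator (Xset c) x * w x))"

definition L2 :: "real measure \<Rightarrow> (real \<Rightarrow> real) \<Rightarrow> bool" where
  "L2 M f \<longleftrightarrow> f \<in> borel_measurable M \<and> integrable M (\<lambda>x. (f x)\<^sup>2)"

definition ip :: "real measure \<Rightarrow> (real \<Rightarrow> real) \<Rightarrow> (real \<Rightarrow> real) \<Rightarrow> real" where
  "ip M f g = (\<integral>x. f x * g x \<partial>M)"

definition ONB :: "real measure \<Rightarrow> (nat \<Rightarrow> real \<Rightarrow> real) \<Rightarrow> bool" where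
  "ONB M \<phi> \<longleftrightarrow> (\<forall>k. L2 M (\<phi> k)) \<and>
     (\<forall>k m. ip M (\<phi> k) (\<phi> m) = (if k = m then 1 else 0)) \<and>
     (\<forall>f. L2 M f \<and> (\<forall>k. ip M f (\<phi> k) = 0) \<longrightarrow> (AE x in M. f x = 0))"

definition even_ext :: "(real \<Rightarrow> real) \<Rightarrow> real \<Rightarrow> real" where
  "even_ext f = (\<lambda>x. f \<bar>x\<bar>)"

definition odd_ext :: "(real \<Rightarrow> real) \<Rightarrow> real \<Rightarrow> real" where
  "odd_ext f = (\<lambda>x. sgn x * f \<bar>x\<bar>)"

definition Phi1 :: "(nat \<Rightarrow> real) \<Rightarrow> real \<Rightarrow> (real \<Rightarrow> real) \<Rightarrow> (real \<Rightarrow> real)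
     \<Rightarrow> (nat \<Rightarrow> real \<Rightarrow> real) \<Rightarrow> nat \<Rightarrow> real \<Rightarrow> real" where
  "Phi1 lam a p q \<phi> n x =
     (if even n then (1 / sqrt 2) * even_ext (\<phi> (n div 2)) x
      else - (1 / sqrt 2) * (lam ((n + 1) div 2) - a) powr (-1/2)
             * delta (even_ext p) (odd_ext q) (even_ext (\<phi> ((n + 1) div 2))) x)"

definition Phi :: "('d::finite \<Rightarrow> nat \<Rightarrow> real) \<Rightarrow> ('d \<Rightarrow> real) \<Rightarrow> ('d \<Rightarrow> real \<Rightarrow> real)
     \<Rightarrow> ('d \<Rightarrow> real \<Rightarrow> real) \<Rightarrow> ('d \<Rightarrow> nat \<Rightarrow> real \<Rightarrow> real) \<Rightarrow> ('d \<Rightarrow> int)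
     \<Rightarrow> ('d \<Rightarrow> real) \<Rightarrow> real" where
  "Phi lam a p q \<phi> n x =
     (if \<forall>i. 0 \<le> n i
      then (\<Prod>i\<in>UNIV. Phi1 (lam i) (a i) (p i) (q i) (\<phi> i) (nat (n i)) (x i))
      else 0)"

definition sigma :: "'d \<Rightarrow> ('d \<Rightarrow> real) \<Rightarrow> 'd \<Rightarrow> real" where
  "sigma j x = x(j := - x j)"

definition partial :: "'d \<Rightarrow> (('d \<Rightarrow> real) \<Rightarrow> real) \<Rightarrow> ('d \<Rightarrow> real) \<Rightarrow> real" where
  "partial j f x = deriv (\<lambda>t. f (x(j := t))) (x j)"

definition Dop :: "'d \<Rightarrow> ('d \<Rightarrow> real \<Rightarrow> real) \<Rightarrow> ('d \<Rightarrow> real \<Rightarrow> real) \<Rightarrow> ('d \<Rightarrow> real \<Rightarrow> real)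
     \<Rightarrow> (('d \<Rightarrow> real) \<Rightarrow> real) \<Rightarrow> ('d \<Rightarrow> real) \<Rightarrow> real" where
  "Dop j w p q f x =
     (let pe = even_ext (p j); we = even_ext (w j); qo = odd_ext (q j); t = x j in
      pe t * partial j f x + qo t * (f x + f (sigma j x)) / 2
      + (pe t * (deriv we t / we t) + deriv pe t - qo t) * (f x - f (sigma j x)) / 2)"

end

theory Submission imports Defs begin

lemma open_Xsym: "open (Xsym c)"
proof (cases c)
  case (real r)
  have "Xsym c = {x. x \<noteq> 0} \<inter> {x. \<bar>x\<bar> < r}" using real by (auto simp: Xsym_def)
  moreover have "open {x::real. \<bar>x\<bar> < r}" by (intro open_Collect_less continuous_intros)
  moreover have "open {x::real. x \<noteq> 0}" by (intro open_Collect_neq continuous_intros)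
  ultimately show ?thesis by auto
next
  case PInf
  then have "Xsym c = {x. x \<noteq> 0}" by (auto simp: Xsym_def)
  then show ?thesis by (simp add: open_Collect_neq)
next
  case MInf
  then have "Xsym c = {}" by (auto simp: Xsym_def)
  then show ?thesis by simp
qed

lemma open_Xset: "open (Xset c)"
proof (cases c)
  case (real r)
  have "Xset c = {x. 0 < x} \<inter> {x. x < r}" using real by (auto simp: Xset_def)
  moreover have "open {x::real. x < r}" by (intro open_Collect_less continuous_intros)
  moreover have "open {x::real. 0 < x}" by (intro open_Collect_less continuous_intros)
  ultimately show ?thesis by auto
next
  case PInf
  then have "Xset c = {x. 0 < x}" by (auto simp: Xset_def)
  then show ?thesis by (simp add: open_Collect_less)
next
  case MInf
  then have "Xset c = {}" by (auto simp: Xset_def)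
  then show ?thesis by simp
qed

lemma Xsym_abs: "t \<in> Xsym c \<Longrightarrow> \<bar>t\<bar> \<in> Xset c"
  by (auto simp: Xsym_def Xset_def)
lemma Xsym_uminus: "t \<in> Xsym c \<Longrightarrow> -t \<in> Xsym c"
  by (auto simp: Xsym_def)
lemma Xsym_nz: "t \<in> Xsym c \<Longrightarrow> t \<noteq> 0"
  by (auto simp: Xsym_def)

lemma deriv_local:
  assumes "open S" "x \<in> S" "\<And>y. y \<in> S \<Longrightarrow> f y = g y"
  shows "deriv f x = deriv g x"
proof -
  have "\<And>D. (f has_field_derivative D) (at x) \<longleftrightarrow> (g has_field_derivative D) (at x)"
    using assms has_field_derivative_transform_within_open by metis
  then show ?thesis unfolding deriv_def by simp
qed

lemma sgn_sq: "(t::real) \<noteq> 0 \<Longrightarrow> sgn t * sgn t = 1"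
  by (simp add: sgn_real_def)

lemma even_ext_deriv:
  assumes t: "t \<noteq> 0" and f: "(f has_field_derivative D) (at \<bar>t\<bar>)"
  shows "(even_ext f has_field_derivative sgn t * D) (at t)"
proof -
  have "sgn t * t = \<bar>t\<bar>" by (simp add: sgn_mult_abs abs_sgn)
  then have f': "(f has_field_derivative D) (at (sgn t * t))" using f by simp
  have "((\<lambda>s. f (sgn t * s)) has_field_derivative D * sgn t) (at t)"
    using DERIV_chain[of f D "\<lambda>s. sgn t * s" t "sgn t"] f' by (auto simp: o_def intro: derivative_eq_intros)
  then have "((\<lambda>s. f (sgn t * s)) has_field_derivative sgn t * D) (at t)" by (simp add: mult.commute)
  then show ?thesis
  proof (rule has_field_derivative_transform_within_open[where S="{s. 0 < sgn t * s}"], simp_all)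
    show "open {s. 0 < sgn t * s}" by (intro open_Collect_less continuous_intros)
    show "0 < sgn t * t" using t by (simp add: sgn_real_def)
    show "\<And>x. 0 < sgn t * x \<Longrightarrow> f (sgn t * x) = even_ext f x"
      by (auto simp: even_ext_def sgn_real_def split: if_splits)
  qed
qed

lemma odd_ext_deriv:
  assumes t: "t \<noteq> 0" and f: "(f has_field_derivative D) (at \<bar>t\<bar>)"
  shows "(odd_ext f has_field_derivative D) (at t)"
proof -
  have "sgn t * t = \<bar>t\<bar>" by (simp add: sgn_mult_abs abs_sgn)
  then have f': "(f has_field_derivative D) (at (sgn t * t))" using f by simp
  have "((\<lambda>s. f (sgn t * s)) has_field_derivative D * sgn t) (at t)"
    using DERIV_chain[of f D "\<lambda>s. sgn t * s" t "sgn t"] f' by (auto simp: o_def intro: derivative_eq_intros)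
  then have "((\<lambda>s. sgn t * f (sgn t * s)) has_field_derivative sgn t * (D * sgn t)) (at t)"
    by (rule DERIV_cmult)
  then have "((\<lambda>s. sgn t * f (sgn t * s)) has_field_derivative D) (at t)"
    using sgn_sq[OF t] by (simp add: algebra_simps)
  then show ?thesis
  proof (rule has_field_derivative_transform_within_open[where S="{s. 0 < sgn t * s}"], simp_all)
    show "open {s. 0 < sgn t * s}" by (intro open_Collect_less continuous_intros)
    show "0 < sgn t * t" using t by (simp add: sgn_real_def)
    show "\<And>x. 0 < sgn t * x \<Longrightarrow> sgn t * f (sgn t * x) = odd_ext f x"
      by (auto simp: odd_ext_def sgn_real_def split: if_splits)
  qed
qed

lemma powr_mhalf: "(x::real) > 0 \<Longrightarrow> x powr (-1/2) = inverse (sqrt x)"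
  using powr_minus[of x "1/2"] powr_half_sqrt[of x] by simp

definition D1 :: "(real\<Rightarrow>real) \<Rightarrow> (real\<Rightarrow>real) \<Rightarrow> (real\<Rightarrow>real) \<Rightarrow> (real\<Rightarrow>real) \<Rightarrow> real \<Rightarrow> real" where
  "D1 w p q g t = (let pe = even_ext p; we = even_ext w; qo = odd_ext q in
      pe t * deriv g t + qo t * (g t + g (-t)) / 2
      + (pe t * (deriv we t / we t) + deriv pe t - qo t) * (g t - g (-t)) / 2)"

context
  fixes c :: ereal and w p q :: "real \<Rightarrow> real" and \<phi> :: "nat \<Rightarrow> real \<Rightarrow> real"
    and lam :: "nat \<Rightarrow> real" and a :: real
  assumes w_d: "\<And>x. x \<in> Xset c \<Longrightarrow> w field_differentiable at x"
    and p_d: "\<And>x. x \<in> Xset c \<Longrightarrow> p field_differentiable at x"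
    and q_d: "\<And>x. x \<in> Xset c \<Longrightarrow> q field_differentiable at x"
    and phi_d: "\<And>k x. x \<in> Xset c \<Longrightarrow> \<phi> k field_differentiable at x"
    and dphi_d: "\<And>k x. x \<in> Xset c \<Longrightarrow> deriv (\<phi> k) field_differentiable at x"
    and eig: "\<And>k x. x \<in> Xset c \<Longrightarrow> Lop a w p q (\<phi> k) x = lam k * \<phi> k x"
    and lam_pos: "\<And>k. k \<ge> 1 \<Longrightarrow> lam k > a"
    and delta0: "\<And>x. x \<in> Xset c \<Longrightarrow> delta p q (\<phi> 0) x = 0"
begin

lemma dphi_diff: "u \<in> Xset c \<Longrightarrow> delta p q (\<phi> k) field_differentiable at u"
  unfolding delta_def
  by (intro field_differentiable_add field_differentiable_mult p_d q_d phi_d dphi_d)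

lemma ee_has: "t \<in> Xsym c \<Longrightarrow> u \<in> Xset c \<Longrightarrow> u = \<bar>t\<bar> \<Longrightarrow> f field_differentiable at u
   \<Longrightarrow> (even_ext f has_field_derivative sgn t * deriv f u) (at t)"
  by (intro even_ext_deriv) (auto simp: Xsym_nz DERIV_deriv_iff_field_differentiable)

lemma ee_deriv: "t \<in> Xsym c \<Longrightarrow> f field_differentiable at \<bar>t\<bar>
   \<Longrightarrow> deriv (even_ext f) t = sgn t * deriv f \<bar>t\<bar>"
  by (intro DERIV_imp_deriv even_ext_deriv) (auto simp: Xsym_nz DERIV_deriv_iff_field_differentiable)

lemma ee_diff: "t \<in> Xsym c \<Longrightarrow> f field_differentiable at \<bar>t\<bar>
   \<Longrightarrow> even_ext f field_differentiable at t"
  using even_ext_deriv[of t f] Xsym_nz field_differentiable_def DERIV_deriv_iff_field_differentiable by metis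

abbreviation "G k \<equiv> delta (even_ext p) (odd_ext q) (even_ext (\<phi> k))"

lemma G_eq: "t \<in> Xsym c \<Longrightarrow> G k t = odd_ext (delta p q (\<phi> k)) t"
proof -
  assume t: "t \<in> Xsym c"
  have u: "\<bar>t\<bar> \<in> Xset c" using t by (rule Xsym_abs)
  show ?thesis
    using ee_deriv[OF t phi_d[OF u]]
    by (simp add: delta_def odd_ext_def even_ext_def algebra_simps)
qed

lemma G_has: "t \<in> Xsym c \<Longrightarrow> (G k has_field_derivative deriv (delta p q (\<phi> k)) \<bar>t\<bar>) (at t)"
proof -
  assume t: "t \<in> Xsym c"
  have u: "\<bar>t\<bar> \<in> Xset c" using t by (rule Xsym_abs)
  have "(odd_ext (delta p q (\<phi> k)) has_field_derivative deriv (delta p q (\<phi> k)) \<bar>t\<bar>) (at t)"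
    using odd_ext_deriv[OF Xsym_nz[OF t]] dphi_diff[OF u] DERIV_deriv_iff_field_differentiable by blast
  then show ?thesis
    by (rule has_field_derivative_transform_within_open[OF _ open_Xsym t]) (simp add: G_eq)
qed

lemma G_odd: "t \<in> Xsym c \<Longrightarrow> G k (-t) = - G k t"
  using G_eq[of t k] G_eq[of "-t" k] Xsym_uminus[of t c] by (simp add: odd_ext_def)

lemma D1_even: assumes t: "t \<in> Xsym c"
  shows "D1 w p q (\<lambda>x. K * even_ext (\<phi> k) x) t = K * G k t"
proof -
  have u: "\<bar>t\<bar> \<in> Xset c" using t by (rule Xsym_abs)
  have d: "deriv (\<lambda>x. K * even_ext (\<phi> k) x) t = K * (sgn t * deriv (\<phi> k) \<bar>t\<bar>)"
    by (intro DERIV_imp_deriv DERIV_cmult ee_has[OF t u] phi_d[OF u]) simp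
  have e: "even_ext (\<phi> k) (-t) = even_ext (\<phi> k) t" by (simp add: even_ext_def)
  show ?thesis
    unfolding D1_def Let_def d e using ee_deriv[OF t phi_d[OF u]]
    by (simp add: delta_def odd_ext_def even_ext_def algebra_simps)
qed

lemma D1_odd: assumes t: "t \<in> Xsym c"
  shows "D1 w p q (\<lambda>x. K * G k x) t = - K * (lam k - a) * \<phi> k \<bar>t\<bar>"
proof -
  have u: "\<bar>t\<bar> \<in> Xset c" using t by (rule Xsym_abs)
  have d: "deriv (\<lambda>x. K * G k x) t = K * deriv (delta p q (\<phi> k)) \<bar>t\<bar>"
    by (intro DERIV_imp_deriv DERIV_cmult G_has[OF t])
  have dw: "deriv (even_ext w) t = sgn t * deriv w \<bar>t\<bar>" by (rule ee_deriv[OF t w_d[OF u]])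
  have dp: "deriv (even_ext p) t = sgn t * deriv p \<bar>t\<bar>" by (rule ee_deriv[OF t p_d[OF u]])
  have Gm: "G k (-t) = - G k t" by (rule G_odd[OF t])
  have Gt: "G k t = sgn t * delta p q (\<phi> k) \<bar>t\<bar>" using G_eq[OF t] by (simp add: odd_ext_def)
  have E: "a * \<phi> k \<bar>t\<bar> + delta_star w p q (delta p q (\<phi> k)) \<bar>t\<bar> = lam k * \<phi> k \<bar>t\<bar>"
    using eig[OF u, of k] by (simp add: Lop_def)
  define s where "s = sgn t"
  have s2: "s * s = 1" using Xsym_nz[OF t] by (simp add: s_def sgn_real_def)
  define g where "g = delta p q (\<phi> k) \<bar>t\<bar>"
  define g' where "g' = deriv (delta p q (\<phi> k)) \<bar>t\<bar>"
  define r where "r = deriv w \<bar>t\<bar> / w \<bar>t\<bar>"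
  have E': "a * \<phi> k \<bar>t\<bar> + (- p \<bar>t\<bar> * g' + q \<bar>t\<bar> * g - p \<bar>t\<bar> * r * g - deriv p \<bar>t\<bar> * g) = lam k * \<phi> k \<bar>t\<bar>"
    using E by (simp add: delta_star_def g_def g'_def r_def)
  have "D1 w p q (\<lambda>x. K * G k x) t = p \<bar>t\<bar> * (K * g') + (p \<bar>t\<bar> * (s * r) + s * deriv p \<bar>t\<bar> - s * q \<bar>t\<bar>) * (K * s * g)"
  proof -
    have Q: "odd_ext q t = s * q \<bar>t\<bar>" by (simp add: odd_ext_def s_def)
    have W: "deriv (even_ext w) t / even_ext w t = s * r" unfolding dw by (simp add: s_def r_def even_ext_def)
    have "D1 w p q (\<lambda>x. K * G k x) t = p \<bar>t\<bar> * (K * g') + (p \<bar>t\<bar> * (s * r) + s * deriv p \<bar>t\<bar> - s * q \<bar>t\<bar>) * (K * s * g)"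
      unfolding D1_def Let_def d W dp Gm Gt Q s_def[symmetric] g_def[symmetric] g'_def[symmetric]
      by (simp add: even_ext_def field_simps)
    then show ?thesis .
  qed
  also have "\<dots> = K * (p \<bar>t\<bar> * g') + K * ((p \<bar>t\<bar> * r + deriv p \<bar>t\<bar> - q \<bar>t\<bar>) * g) * (s * s)"
    by (simp add: algebra_simps)
  also have "\<dots> = K * (p \<bar>t\<bar> * g' + (p \<bar>t\<bar> * r + deriv p \<bar>t\<bar> - q \<bar>t\<bar>) * g)"
    using s2 by (simp add: algebra_simps)
  also have "\<dots> = - K * (lam k - a) * \<phi> k \<bar>t\<bar>"
  proof -
    have X: "p \<bar>t\<bar> * g' + (p \<bar>t\<bar> * r + deriv p \<bar>t\<bar> - q \<bar>t\<bar>) * g = - (lam k - a) * \<phi> k \<bar>t\<bar>"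
      using E' by (simp add: algebra_simps)
    show ?thesis unfolding X by (simp add: algebra_simps)
  qed
  finally show ?thesis .
qed

abbreviation "P1 \<equiv> Phi1 lam a p q \<phi>"

lemma P1_even: "even m \<Longrightarrow> P1 m = (\<lambda>x. (1 / sqrt 2) * even_ext (\<phi> (m div 2)) x)"
  by (rule ext) (simp add: Phi1_def)

lemma P1_odd: "odd m \<Longrightarrow> P1 m = (\<lambda>x. (- (1 / sqrt 2) * (lam ((m + 1) div 2) - a) powr (-1/2)) * G ((m + 1) div 2) x)"
  by (rule ext) (simp add: Phi1_def)

lemma P1_diff: "t \<in> Xsym c \<Longrightarrow> P1 m field_differentiable at t"
proof -
  assume t: "t \<in> Xsym c"
  have u: "\<bar>t\<bar> \<in> Xset c" using t by (rule Xsym_abs)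
  show ?thesis
  proof (cases "even m")
    case True
    show ?thesis unfolding P1_even[OF True]
      by (intro field_differentiable_mult field_differentiable_const ee_diff[OF t] phi_d[OF u])
  next
    case False
    have "G ((m + 1) div 2) field_differentiable at t"
      using G_has[OF t] field_differentiable_def by blast
    then show ?thesis unfolding P1_odd[OF False]
      by (intro field_differentiable_mult field_differentiable_const)
  qed
qed

lemma P1_E0: "t \<in> Xsym c \<Longrightarrow> D1 w p q (P1 0) t = 0"
proof -
  assume t: "t \<in> Xsym c"
  have u: "\<bar>t\<bar> \<in> Xset c" using t by (rule Xsym_abs)
  have e: "P1 0 = (\<lambda>x. (1 / sqrt 2) * even_ext (\<phi> 0) x)" by (rule ext) (simp add: Phi1_def)
  show ?thesis unfolding e D1_even[OF t] G_eq[OF t]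
    using delta0[OF u] by (simp add: odd_ext_def)
qed

lemma P1_E: assumes t: "t \<in> Xsym c" and m: "even m" "m \<noteq> 0"
  shows "D1 w p q (P1 m) t = - sqrt (lam ((m + 1) div 2) - a) * P1 (m - 1) t"
proof -
  define k where "k = m div 2"
  have k1: "k \<ge> 1" using m by (auto simp: k_def elim!: evenE)
  have k2: "(m + 1) div 2 = k" "(m - 1 + 1) div 2 = k" using m by (auto simp: k_def elim!: evenE)
  have o: "odd (m - 1)" using m by simp
  have pos: "lam k - a > 0" using lam_pos[OF k1] by simp
  show ?thesis unfolding P1_even[OF m(1)] D1_even[OF t] P1_odd[OF o] k2 k_def[symmetric] powr_mhalf[OF pos]
    using pos by simp
qed

lemma P1_O: assumes t: "t \<in> Xsym c" and m: "odd m"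
  shows "D1 w p q (P1 m) t = sqrt (lam ((m + 1) div 2) - a) * P1 (m + 1) t"
proof -
  define k where "k = (m + 1) div 2"
  have k1: "k \<ge> 1" using m by (auto simp: k_def elim!: oddE)
  have k2: "(m + 1) div 2 = k" by (simp add: k_def)
  have e: "even (m + 1)" using m by simp
  have pos: "lam k - a > 0" using lam_pos[OF k1] by simp
  have "D1 w p q (P1 m) t = - (- (1 / sqrt 2) * (lam k - a) powr (-1/2)) * (lam k - a) * \<phi> k \<bar>t\<bar>"
    unfolding P1_odd[OF m] k2 by (rule D1_odd[OF t])
  also have "\<dots> = sqrt (lam k - a) * ((1 / sqrt 2) * even_ext (\<phi> k) t)"
  proof -
    have iL: "inverse (sqrt (lam k - a)) * (lam k - a) = sqrt (lam k - a)"
      using pos real_div_sqrt[of "lam k - a"] by (simp add: divide_inverse mult.commute)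
    show ?thesis unfolding powr_mhalf[OF pos] even_ext_def
      by (simp only: mult.assoc iL mult_minus_left minus_minus) (simp add: algebra_simps)
  qed
  finally show ?thesis unfolding P1_even[OF e] k2 by (simp add: k_def)
qed

end


lemma Ck_diff: "Ck_on k S f \<Longrightarrow> m < k \<Longrightarrow> x \<in> S \<Longrightarrow> (deriv ^^ m) f field_differentiable at x"
  by (simp add: Ck_on_def)

lemma delta0_zero:
  fixes w p q g :: "real \<Rightarrow> real"
  assumes w_d: "\<And>x. x \<in> Xset c \<Longrightarrow> w field_differentiable at x"
    and w_pos: "\<And>x. x \<in> Xset c \<Longrightarrow> w x > 0"
    and g_d: "\<And>x. x \<in> Xset c \<Longrightarrow> g field_differentiable at x"
    and h0: "\<And>x. x \<in> Xset c \<Longrightarrow> h x = 0"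
    and L2g: "L2 (meas c w) g"
    and adj: "ip (meas c w) g g = ip (meas c w) h f"
    and u: "u \<in> Xset c"
  shows "g u = 0"
proof (rule ccontr)
  assume gu: "g u \<noteq> 0"
  define X where "X = Xset c"
  define dens where "dens = (\<lambda>x. ennreal (indicator X x * w x))"
  have cw: "continuous_on X w"
    using w_d by (auto simp: X_def intro!: continuous_at_imp_continuous_on field_differentiable_imp_continuous_at)
  have "(\<lambda>x. indicator X x *\<^sub>R w x) \<in> borel_measurable borel"
    by (rule borel_measurable_continuous_on_indicator[OF _ cw]) (simp add: X_def open_Xset borel_open)
  then have mdens: "dens \<in> borel_measurable lborel"
    unfolding dens_def by (simp add: measurable_compose[OF _ measurable_ennreal])
  have M: "meas c w = density lborel dens" by (simp add: meas_def dens_def X_def)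
  have pos_in: "0 < dens x \<Longrightarrow> x \<in> X" for x
    by (cases "x \<in> X") (auto simp: dens_def)
  have "AE x in meas c w. h x * f x = 0"
    unfolding M AE_density[OF mdens]
    by (rule AE_I2) (auto dest!: pos_in simp: X_def h0)
  then have "ip (meas c w) h f = 0" unfolding ip_def by (rule integral_eq_zero_AE)
  then have "integral\<^sup>L (meas c w) (\<lambda>x. (g x)\<^sup>2) = 0" using adj by (simp add: ip_def power2_eq_square)
  then have "AE x in meas c w. (g x)\<^sup>2 = 0"
    using integral_nonneg_eq_0_iff_AE[of "meas c w" "\<lambda>x. (g x)\<^sup>2"] L2g by (simp add: L2_def)
  then have "AE x in lborel. 0 < dens x \<longrightarrow> (g x)\<^sup>2 = 0"
    unfolding M AE_density[OF mdens] .
  then have ae: "AE x in lborel. x \<in> X \<longrightarrow> g x = 0"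
    by (rule AE_mp) (auto simp: dens_def X_def w_pos)
  have cg: "continuous_on X g"
    using g_d by (auto simp: X_def intro!: continuous_at_imp_continuous_on field_differentiable_imp_continuous_at)
  have "open (X \<inter> g -` (- {0}))"
    by (rule continuous_open_preimage[OF cg]) (auto simp: X_def open_Xset)
  moreover have "u \<in> X \<inter> g -` (- {0})" using u gu by (simp add: X_def)
  ultimately obtain e where e: "e > 0" "ball u e \<subseteq> X \<inter> g -` (- {0})"
    by (meson open_contains_ball)
  have "AE x in lborel. x \<notin> ball u e"
    using ae
  proof eventually_elim
    case (elim x) then show ?case using e by auto
  qed
  then have "emeasure lborel (ball u e) = 0"
    by (subst (asm) AE_iff_measurable[of "ball u e"]) auto
  moreover have "emeasure lborel (ball u e) = ennreal (2 * e)"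
    using e by (simp add: ball_eq_greaterThanLessThan)
  ultimately show False using e by simp
qed


lemma Dop_prod:
  fixes F R :: "('d::finite \<Rightarrow> real) \<Rightarrow> real"
  assumes F: "\<And>y. F y = g (y j) * R y" and R: "\<And>y t. R (y(j := t)) = R y"
    and gd: "g field_differentiable at (x j)"
  shows "Dop j w p q F x = R x * D1 (w j) (p j) (q j) g (x j)"
proof -
  have "partial j F x = deriv (\<lambda>t. g t * R x) (x j)"
    unfolding partial_def F R by simp
  also have "\<dots> = deriv g (x j) * R x" by (rule deriv_cmult_right[OF gd])
  finally have pa: "partial j F x = deriv g (x j) * R x" .
  have sg: "F (sigma j x) = g (- x j) * R x" unfolding F sigma_def R by simp
  show ?thesis unfolding Dop_def D1_def Let_def pa sg F[of x]
    by (simp add: algebra_simps)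
qed

lemma Dop_local:
  fixes F H :: "('d::finite \<Rightarrow> real) \<Rightarrow> real"
  assumes FH: "\<And>y. (\<forall>i. y i \<in> Xsym c) \<Longrightarrow> F y = H y" and x: "\<forall>i. x i \<in> Xsym c"
  shows "Dop j w p q F x = Dop j w p q H x"
proof -
  have "partial j F x = partial j H x"
    unfolding partial_def
  proof (rule deriv_local[OF open_Xsym])
    show "x j \<in> Xsym c" using x by simp
    fix t assume "t \<in> Xsym c"
    then show "F (x(j := t)) = H (x(j := t))" using x by (intro FH) auto
  qed
  moreover have "F x = H x" using FH x by simp
  moreover have "F (sigma j x) = H (sigma j x)"
    using x by (intro FH) (auto simp: sigma_def Xsym_uminus)
  ultimately show ?thesis unfolding Dop_def by simp
qed

lemma Dop_zero: "Dop j w p q (\<lambda>y. 0) x = 0"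
  by (simp add: Dop_def partial_def)


definition swap_at :: "'d \<Rightarrow> ('d \<Rightarrow> nat) \<Rightarrow> 'd \<Rightarrow> nat" where
  "swap_at j n = n(j := if even (n j) then n j - 1 else n j + 1)"

lemma sw_j: "swap_at j n j = (if even (n j) then n j - 1 else n j + 1)" by (simp add: swap_at_def)
lemma sw_o: "i \<noteq> j \<Longrightarrow> swap_at j n i = n i" by (simp add: swap_at_def)

lemma sw_props:
  assumes "n j \<ge> 1"
  shows "swap_at j (swap_at j n) = n" "swap_at j n j \<noteq> 0" "(swap_at j n j + 1) div 2 = (n j + 1) div 2"
    "((-1::real) ^ (swap_at j n j)) = - ((-1) ^ (n j))"
  using assms by (auto simp: swap_at_def fun_eq_iff elim!: evenE oddE)

context
  fixes c :: ereal and w p q :: "'d::finite \<Rightarrow> real \<Rightarrow> real" and \<phi> :: "'d \<Rightarrow> nat \<Rightarrow> real \<Rightarrow> real"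
    and lam :: "'d \<Rightarrow> nat \<Rightarrow> real" and a :: "'d \<Rightarrow> real" and j :: 'd
  assumes hw: "\<And>x. x \<in> Xset c \<Longrightarrow> w j field_differentiable at x"
    and hp: "\<And>x. x \<in> Xset c \<Longrightarrow> p j field_differentiable at x"
    and hq: "\<And>x. x \<in> Xset c \<Longrightarrow> q j field_differentiable at x"
    and hphi: "\<And>k x. x \<in> Xset c \<Longrightarrow> \<phi> j k field_differentiable at x"
    and hdphi: "\<And>k x. x \<in> Xset c \<Longrightarrow> deriv (\<phi> j k) field_differentiable at x"
    and heig: "\<And>k x. x \<in> Xset c \<Longrightarrow> Lop (a j) (w j) (p j) (q j) (\<phi> j k) x = lam j k * \<phi> j k x"
    and hlam: "\<And>k. k \<ge> 1 \<Longrightarrow> lam j k > a j"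
    and hd0: "\<And>x. x \<in> Xset c \<Longrightarrow> delta (p j) (q j) (\<phi> j 0) x = 0"
begin

abbreviation "PN n \<equiv> Phi lam a p q \<phi> (\<lambda>i. int (n i))"
abbreviation "Q1 i \<equiv> Phi1 (lam i) (a i) (p i) (q i) (\<phi> i)"
abbreviation "RR n y \<equiv> (\<Prod>i\<in>UNIV - {j}. Q1 i (n i) (y i))"

abbreviation "sw n \<equiv> swap_at j n"

lemma PN_split: "PN n y = Q1 j (n j) (y j) * RR n y"
  unfolding Phi_def by (simp add: prod.remove[of UNIV j])

lemma RR_upd: "RR n (y(j := t)) = RR n y"
  by (intro prod.cong) auto

lemma RR_sw: "RR (sw n) y = RR n y"
  by (intro prod.cong) (auto simp: swap_at_def)

lemma step:
  assumes x: "\<forall>i. x i \<in> Xsym c"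
  shows "Dop j w p q (\<lambda>y. C * PN n y) x =
     C * (if n j = 0 then 0 else (-1) ^ (n j + 1) * sqrt (lam j ((n j + 1) div 2) - a j) * PN (sw n) x)"
proof -
  have xj: "x j \<in> Xsym c" using x by simp
  have "Dop j w p q (\<lambda>y. C * PN n y) x = C * RR n x * D1 (w j) (p j) (q j) (Q1 j (n j)) (x j)"
    by (rule Dop_prod[where R="\<lambda>y. C * RR n y"])
       (auto simp: PN_split RR_upd P1_diff[where c=c and w="w j" and p="p j" and q="q j" and \<phi>="\<phi> j" and lam="lam j" and a="a j", OF hw hp hq hphi hdphi heig hlam hd0 xj])
  also have "\<dots> = C * (if n j = 0 then 0 else (-1) ^ (n j + 1) * sqrt (lam j ((n j + 1) div 2) - a j) * PN (sw n) x)"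
  proof (cases "n j = 0")
    case True
    then show ?thesis using P1_E0[where c=c and w="w j" and p="p j" and q="q j" and \<phi>="\<phi> j" and lam="lam j" and a="a j", OF hw hp hq hphi hdphi heig hlam hd0 xj] by simp
  next
    case False
    show ?thesis
    proof (cases "even (n j)")
      case True
      have "sw n j = n j - 1" by (simp add: swap_at_def True)
      then show ?thesis using P1_E[where c=c and w="w j" and p="p j" and q="q j" and \<phi>="\<phi> j" and lam="lam j" and a="a j", OF hw hp hq hphi hdphi heig hlam hd0 xj True False] False True
        by (simp add: PN_split RR_sw)
    next
      case o: False
      have "sw n j = n j + 1" by (simp add: swap_at_def o)
      then show ?thesis using P1_O[where c=c and w="w j" and p="p j" and q="q j" and \<phi>="\<phi> j" and lam="lam j" and a="a j", OF hw hp hq hphi hdphi heig hlam hd0 xj o] False o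
        by (simp add: PN_split RR_sw)
    qed
  qed
  finally show ?thesis .
qed


lemma iter_pos:
  assumes nj: "n j \<ge> 1"
  shows "\<forall>x. (\<forall>i. x i \<in> Xsym c) \<longrightarrow> (Dop j w p q ^^ N) (PN n) x =
     (if even N then (-1) ^ (N div 2) * sqrt (lam j ((n j + 1) div 2) - a j) ^ N * PN n x
      else (-1) ^ (n j + 1 + (N - 1) div 2) * sqrt (lam j ((n j + 1) div 2) - a j) ^ N * PN (sw n) x)"
proof (induction N)
  case 0
  then show ?case by simp
next
  case (Suc N)
  define m where "m = sqrt (lam j ((n j + 1) div 2) - a j)"
  show ?case
  proof (intro allI impI)
    fix x :: "'d \<Rightarrow> real" assume x: "\<forall>i. x i \<in> Xsym c"
    have "(Dop j w p q ^^ Suc N) (PN n) x = Dop j w p q ((Dop j w p q ^^ N) (PN n)) x" by simp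
    show "(Dop j w p q ^^ Suc N) (PN n) x = (if even (Suc N) then (-1) ^ (Suc N div 2) * sqrt (lam j ((n j + 1) div 2) - a j) ^ Suc N * PN n x
      else (-1) ^ (n j + 1 + (Suc N - 1) div 2) * sqrt (lam j ((n j + 1) div 2) - a j) ^ Suc N * PN (sw n) x)"
    proof (cases "even N")
      case True
      have "(Dop j w p q ^^ Suc N) (PN n) x = Dop j w p q (\<lambda>y. ((-1) ^ (N div 2) * m ^ N) * PN n y) x"
        unfolding funpow.simps o_def
        by (rule Dop_local[OF _ x]) (use Suc.IH True in \<open>simp add: m_def\<close>)
      also have "\<dots> = ((-1) ^ (N div 2) * m ^ N) * ((-1) ^ (n j + 1) * m * PN (sw n) x)"
        using step[OF x, of "(-1) ^ (N div 2) * m ^ N" n] nj by (simp add: m_def)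
      finally show ?thesis using True
        by (auto simp: m_def power_add elim!: evenE)
    next
      case False
      have "(Dop j w p q ^^ Suc N) (PN n) x = Dop j w p q (\<lambda>y. ((-1) ^ (n j + 1 + (N - 1) div 2) * m ^ N) * PN (sw n) y) x"
        unfolding funpow.simps o_def
        by (rule Dop_local[OF _ x]) (use Suc.IH False in \<open>simp add: m_def\<close>)
      also have "\<dots> = ((-1) ^ (n j + 1 + (N - 1) div 2) * m ^ N) * ((-1) ^ (n j) * m * PN n x)"
        using step[OF x, of "(-1) ^ (n j + 1 + (N - 1) div 2) * m ^ N" "sw n"] sw_props[where j=j and n=n, OF nj]
        by (simp add: m_def)
      finally show ?thesis using False
        by (auto simp: m_def power_add elim!: oddE)
    qed
  qed
qed

lemma iter_zero:
  assumes nj: "n j = 0" and a0: "lam j 0 = a j"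
  shows "N \<ge> 1 \<Longrightarrow> \<forall>x. (\<forall>i. x i \<in> Xsym c) \<longrightarrow> (Dop j w p q ^^ N) (PN n) x = 0"
proof (induction N rule: dec_induct)
  case base
  show ?case using step[of _ 1 n] nj by simp
next
  case (step N)
  show ?case
  proof (intro allI impI)
    fix x :: "'d \<Rightarrow> real" assume x: "\<forall>i. x i \<in> Xsym c"
    have "(Dop j w p q ^^ Suc N) (PN n) x = Dop j w p q (\<lambda>y. 0) x"
      unfolding funpow.simps o_def
      by (rule Dop_local[OF _ x]) (use step.IH in simp)
    then show "(Dop j w p q ^^ Suc N) (PN n) x = 0" by (simp add: Dop_zero)
  qed
qed

end


lemma powr_half_pow: "(x::real) > 0 \<Longrightarrow> x powr (real N / 2) = sqrt x ^ N"
  by (simp add: powr_half_sqrt_powr powr_realpow real_sqrt_power)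

theorem mainTheorem5:
  fixes c :: ereal
    and w p q :: "'d::finite \<Rightarrow> real \<Rightarrow> real"
    and a :: "'d \<Rightarrow> real"
    and \<phi> :: "'d \<Rightarrow> nat \<Rightarrow> real \<Rightarrow> real"
    and lam :: "'d \<Rightarrow> nat \<Rightarrow> real"
    and j :: 'd and N :: nat and n :: "'d \<Rightarrow> nat"
  assumes c_pos: "0 < c"
    and w_C2: "\<And>i. Ck_on 2 (Xset c) (w i)"
    and w_pos: "\<And>i x. x \<in> Xset c \<Longrightarrow> w i x > 0"
    and p_C2: "\<And>i. Ck_on 2 (Xset c) (p i)"
    and p_nz: "\<And>i x. x \<in> Xset c \<Longrightarrow> p i x \<noteq> 0"
    and q_C1: "\<And>i. Ck_on 1 (Xset c) (q i)"
    and a_nonneg: "\<And>i. a i \<ge> 0"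
    and onb: "\<And>i. ONB (meas c (w i)) (\<phi> i)"
    and phi_smooth: "\<And>i k. smooth_on (Xset c) (\<phi> i k)"
    and eigen: "\<And>i k x. x \<in> Xset c \<Longrightarrow>
                   Lop (a i) (w i) (p i) (q i) (\<phi> i k) x = lam i k * \<phi> i k x"
    and lam_mono: "\<And>i. strict_mono (lam i)"
    and lam_inf: "\<And>i. filterlim (lam i) at_top sequentially"
    and delta_L2: "\<And>i k. L2 (meas c (w i)) (delta (p i) (q i) (\<phi> i k))"
    and delta_adj: "\<And>i k m.
          ip (meas c (w i)) (delta (p i) (q i) (\<phi> i k)) (delta (p i) (q i) (\<phi> i m))
        = ip (meas c (w i)) (delta_star (w i) (p i) (q i) (delta (p i) (q i) (\<phi> i k))) (\<phi> i m)"
    and a_eq: "\<And>i. a i = lam i 0"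
    and N_pos: "N \<ge> 1"
  shows "\<forall>x. (\<forall>i. x i \<in> Xsym c) \<longrightarrow>
     ((Dop j w p q ^^ N) (Phi lam a p q \<phi> (\<lambda>i. int (n i))) x =
      (if even N
       then (-1) ^ (N div 2) * (lam j ((n j + 1) div 2) - a j) powr (real N / 2)
              * Phi lam a p q \<phi> (\<lambda>i. int (n i)) x
       else (-1) ^ (n j + 1 + (N - 1) div 2) * (lam j ((n j + 1) div 2) - a j) powr (real N / 2)
              * Phi lam a p q \<phi> (\<lambda>i. int (n i) - (if i = j then (-1) ^ (n j) else 0)) x))"
proof (intro allI impI)
  fix x :: "'d \<Rightarrow> real" assume x: "\<forall>i. x i \<in> Xsym c"
  have hw: "\<And>x. x \<in> Xset c \<Longrightarrow> w j field_differentiable at x"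
    using Ck_diff[OF w_C2[of j], of 0] by simp
  have hp: "\<And>x. x \<in> Xset c \<Longrightarrow> p j field_differentiable at x"
    using Ck_diff[OF p_C2[of j], of 0] by simp
  have hq: "\<And>x. x \<in> Xset c \<Longrightarrow> q j field_differentiable at x"
    using Ck_diff[OF q_C1[of j], of 0] by simp
  have hphi: "\<And>k x. x \<in> Xset c \<Longrightarrow> \<phi> j k field_differentiable at x"
    using phi_smooth Ck_diff[of 2 "Xset c" _ 0] by (simp add: smooth_on_def)
  have hdphi: "\<And>k x. x \<in> Xset c \<Longrightarrow> deriv (\<phi> j k) field_differentiable at x"
    using phi_smooth Ck_diff[of 2 "Xset c" _ 1] by (simp add: smooth_on_def)
  have heig: "\<And>k x. x \<in> Xset c \<Longrightarrow> Lop (a j) (w j) (p j) (q j) (\<phi> j k) x = lam j k * \<phi> j k x"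
    by (rule eigen)
  have hlam: "\<And>k. k \<ge> 1 \<Longrightarrow> lam j k > a j"
    using lam_mono[of j] a_eq[of j] by (simp add: strict_mono_def)
  have g_d: "\<And>x. x \<in> Xset c \<Longrightarrow> delta (p j) (q j) (\<phi> j 0) field_differentiable at x"
    unfolding delta_def by (intro field_differentiable_add field_differentiable_mult hp hq hphi hdphi)
  have h0: "\<And>x. x \<in> Xset c \<Longrightarrow> delta_star (w j) (p j) (q j) (delta (p j) (q j) (\<phi> j 0)) x = 0"
    using eigen[of _ j 0] a_eq[of j] by (simp add: Lop_def)
  have hd0: "\<And>x. x \<in> Xset c \<Longrightarrow> delta (p j) (q j) (\<phi> j 0) x = 0"
    using delta0_zero[OF hw w_pos g_d h0 delta_L2 delta_adj] by blast
  note H = hw hp hq hphi hdphi heig hlam hd0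
  show "(Dop j w p q ^^ N) (Phi lam a p q \<phi> (\<lambda>i. int (n i))) x =
      (if even N
       then (-1) ^ (N div 2) * (lam j ((n j + 1) div 2) - a j) powr (real N / 2)
              * Phi lam a p q \<phi> (\<lambda>i. int (n i)) x
       else (-1) ^ (n j + 1 + (N - 1) div 2) * (lam j ((n j + 1) div 2) - a j) powr (real N / 2)
              * Phi lam a p q \<phi> (\<lambda>i. int (n i) - (if i = j then (-1) ^ (n j) else 0)) x)"
  proof (cases "n j = 0")
    case True
    have "(Dop j w p q ^^ N) (Phi lam a p q \<phi> (\<lambda>i. int (n i))) x = 0"
      using iter_zero[where c=c and w=w and p=p and q=q and \<phi>=\<phi> and lam=lam and a=a and j=j and n=n and N=N, OF H True a_eq[of j, symmetric] N_pos] a_eq[of j] x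
      by simp
    then show ?thesis using True a_eq[of j] by simp
  next
    case False
    then have nj: "n j \<ge> 1" by simp
    have pos: "lam j ((n j + 1) div 2) - a j > 0" using hlam[of "(n j + 1) div 2"] nj by simp
    have iv: "(\<lambda>i. int (n i) - (if i = j then (-1) ^ (n j) else 0)) = (\<lambda>i. int (swap_at j n i))"
    proof (rule ext)
      fix i show "int (n i) - (if i = j then (-1) ^ (n j) else 0) = int (swap_at j n i)"
        using nj by (cases "i = j") (auto simp: sw_j sw_o of_nat_diff)

    qed
    show ?thesis
      unfolding powr_half_pow[OF pos] iv
      using iter_pos[where c=c and w=w and p=p and q=q and \<phi>=\<phi> and lam=lam and a=a and j=j and n=n and N=N, OF H nj] x
      by simp
  qed
qed

end
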